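(* Fix the CE group 0 parameters: $\alpha>2$, $\rho,P,\lambda_B,\gamma_{th}>0$, $\sigma^2\ge0$, $a:=\mathcal{A}_0^1\mathcal{R}_0^1\in(0,1]$, $\lambda_0^a>0$, a repetition number $K_0\in\{1,2\}$, and $c=3.575$. Suppose the following: - Each device (the typical device, indexed $m=0$, and each of the $N_0$ intra-cell interfering devices, indexed $m=1,\dots,N_0$) transmits its preamble $K_0$ times. - Repetition $k$ of device $m$ succeeds (event $\theta_k$) iff all 4 of its symbol-group SINRs are $\ge\gamma_{th}$. - For every set of $k$ repetitions, the joint success probability of device $m$ equals the probability of Lemma 2 with $l=4k$. Explicitly, this probability is $q(4k)$, where $$q(l)=\exp\Big(-\frac{l\gamma_{th}\sigma^2}{\rho}-\frac{2\gamma_{th}^{2/\alpha}a\lambda_0^a\gamma\big(2,\pi\lambda_B(P/\rho)^{2/\alpha}\big)}{\lambda_B\big(1-\exp(-\pi\lambda_B(P/\rho)^{2/\alpha})\big)}\mathcal{F}_0(l)\Big),\qquad \mathcal{F}_0(l)=\int_{\gamma_{th}^{-1/\alpha}}^{\infty}\Big[1-\Big(\frac{1}{1+y^{-\alpha}}\Big)^{l}\Big]y\,dy.$$ - The number $N_0$ of intra-cell interferers has PMF $$\mathbb{P}[N_0=n]=\frac{c^{c+1}\Gamma(n+c+1)(a\lambda_0^a/\lambda_B)^n}{\Gamma(c+1)\Gamma(n+1)(a\lambda_0^a/\lambda_B+c)^{n+c+1}}.$$ Define the preamble transmission success probability of device $m$ as $\mathbb{P}_{S,0,m}[K_0]=\mathbb{P}\big[\bigcup_{k=1}^{K_0}\theta_k\big]$.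 Define the RACH success probability as $$\mathcal{P}_0^1=\sum_{n=0}^{\infty}\mathbb{P}[N_0=n]\,\mathbb{P}_{S,0,0}[K_0]\prod_{m=1}^{n}\big(1-\mathbb{P}_{S,0,m}[K_0]\big).$$ Then $$\mathcal{P}_0^1=\sum_{n=0}^{\infty}\mathbb{P}[N_0=n]\,\Theta_0\,(1-\Theta_0)^{n},\qquad\Theta_0=\sum_{k=1}^{K_0}(-1)^{k+1}\binom{K_0}{k}q(4k).$$
   Context: This is the random access (RACH) model for CE group 0 in an NB-IoT network in the first time slot; group-0 devices use path-loss inversion power control with target $\rho$. The RACH attempt of the typical device succeeds iff its preamble is successfully received in at least one repetition and no intra-cell device using the same preamble is also successfully received (no collision). - Base stations form a PPP of intensity $\lambda_B$. - $\lambda_0^a=\lambda_0/S_0$ is the intensity of group-0 devices choosing a given preamble among $S_0$ preambles. - $\mathcal{A}_0^1$ is the probability that a device's buffer is non-empty, and $\mathcal{R}_0^1$ the probability that it is not restricted by the access scheme. - $\gamma(a,b)$ is the lower incomplete gamma function. *)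

theory Defs
  imports "HOL-Probability.Probability"
begin

definition lower_inc_gamma :: "real \<Rightarrow> real \<Rightarrow> real" where
  "lower_inc_gamma s x = (LBINT t=0..x. t powr (s - 1) * exp (- t))"

definition F0 :: "real \<Rightarrow> real \<Rightarrow> nat \<Rightarrow> real" where
  "F0 \<alpha> \<gamma>th l =
     (LINT y:{\<gamma>th powr (-1/\<alpha>)..}|lborel. (1 - (1 / (1 + y powr (-\<alpha>))) ^ l) * y)"

definition q_succ :: "real \<Rightarrow> real \<Rightarrow> real \<Rightarrow> real \<Rightarrow> real \<Rightarrow> real \<Rightarrow> real \<Rightarrow> real \<Rightarrow> nat \<Rightarrow> real" where
  "q_succ \<alpha> \<rho> P lamB \<gamma>th \<sigma>2 a lam0a l =
     exp (- (real l * \<gamma>th * \<sigma>2 / \<rho>)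
          - 2 * \<gamma>th powr (2 / \<alpha>) * a * lam0a
              * lower_inc_gamma 2 (pi * lamB * (P / \<rho>) powr (2 / \<alpha>))
            / (lamB * (1 - exp (- pi * lamB * (P / \<rho>) powr (2 / \<alpha>))))
            * F0 \<alpha> \<gamma>th l)"

definition c_const :: real where "c_const = 3.575"

definition pmf_N0 :: "real \<Rightarrow> real \<Rightarrow> real \<Rightarrow> nat \<Rightarrow> real" where
  "pmf_N0 a lam0a lamB n =
     (let c = c_const; r = a * lam0a / lamB in
      c powr (c + 1) * Gamma (real n + c + 1) * r ^ n
      / (Gamma (c + 1) * Gamma (real n + 1) * (r + c) powr (real n + c + 1)))"

end

theory Submission
  imports Defs
begin

theorem theorem1:
  fixes M :: "'w measure"
    and \<alpha> \<rho> P lamB \<gamma>th \<sigma>2 a lam0a :: real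
    and K0 :: nat
    and sinr :: "nat \<Rightarrow> nat \<Rightarrow> nat \<Rightarrow> 'w \<Rightarrow> real"
    and \<theta> :: "nat \<Rightarrow> nat \<Rightarrow> 'w set"
    and PS :: "nat \<Rightarrow> real"
    and P01 :: real
  assumes "prob_space M"
    and "\<alpha> > 2" and "\<rho> > 0" and "P > 0" and "lamB > 0" and "\<gamma>th > 0" and "\<sigma>2 \<ge> 0"
    and "0 < a" and "a \<le> 1" and "lam0a > 0"
    and "K0 \<in> {1, 2}"
    and sinr_rv: "\<And>m k j. sinr m k j \<in> borel_measurable M"
    and theta_def: "\<And>m k. \<theta> m k = {\<omega> \<in> space M. \<forall>j<4. sinr m k j \<omega> \<ge> \<gamma>th}"
    and joint: "\<And>m J. J \<subseteq> {1..K0} \<Longrightarrow> J \<noteq> {} \<Longrightarrow>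
        measure M (\<Inter>k\<in>J. \<theta> m k) = q_succ \<alpha> \<rho> P lamB \<gamma>th \<sigma>2 a lam0a (4 * card J)"
    and PS_def: "\<And>m. PS m = measure M (\<Union>k\<in>{1..K0}. \<theta> m k)"
    and P01_def: "P01 = (\<Sum>n. pmf_N0 a lam0a lamB n * PS 0 * (\<Prod>m\<in>{1..n}. 1 - PS m))"
  shows "P01 = (\<Sum>n. pmf_N0 a lam0a lamB n
                 * (\<Sum>k=1..K0. (-1) ^ (k + 1) * real (K0 choose k) * q_succ \<alpha> \<rho> P lamB \<gamma>th \<sigma>2 a lam0a (4 * k))
                 * (1 - (\<Sum>k=1..K0. (-1) ^ (k + 1) * real (K0 choose k) * q_succ \<alpha> \<rho> P lamB \<gamma>th \<sigma>2 a lam0a (4 * k))) ^ n)"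
proof -
  interpret p: prob_space M by fact
  let ?q = "q_succ \<alpha> \<rho> P lamB \<gamma>th \<sigma>2 a lam0a"
  let ?T = "(\<Sum>k=1..K0. (-1) ^ (k + 1) * real (K0 choose k) * ?q (4 * k))"
  have meas: "\<theta> m k \<in> sets M" for m k
    unfolding theta_def using sinr_rv by measurable
  have fm: "\<theta> m k \<in> fmeasurable M" for m k
    using meas p.fmeasurable_eq_sets by blast
  have PS_eq: "PS m = ?T" for m
  proof (cases "K0 = 1")
    case True
    have "measure M (\<theta> m 1) = ?q 4"
      using joint[of "{1}" m] True by simp
    then show ?thesis using True PS_def[of m] by simp
  next
    case False
    then have K2: "K0 = 2" using assms(11) by simp
    have u: "(\<Union>k\<in>{1..K0}. \<theta> m k) = \<theta> m 1 \<union> \<theta> m 2"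
    proof -
      have "{1..K0} = {1, 2::nat}" using K2 by auto
      then show ?thesis by auto
    qed
    have i: "\<theta> m 1 \<inter> \<theta> m 2 = (\<Inter>k\<in>{1,2}. \<theta> m k)" by auto
    have j1: "measure M (\<theta> m 1) = ?q 4" using joint[of "{1}" m] K2 by simp
    have j2: "measure M (\<theta> m 2) = ?q 4" using joint[of "{2}" m] K2 by simp
    have j12: "measure M (\<theta> m 1 \<inter> \<theta> m 2) = ?q 8" using joint[of "{1,2}" m] K2 i by simp
    have "PS m = ?q 4 + ?q 4 - ?q 8"
      using PS_def[of m] u measure_Un3[OF fm fm] j1 j2 j12 by simp
    moreover have "?T = 2 * ?q 4 - ?q 8"
      using K2 by (simp add: numeral_2_eq_2)
    ultimately show ?thesis by simp
  qed
  show ?thesis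
    unfolding P01_def PS_eq by simp
qed

end
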